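(* Let $G\subseteq W(\mathsf D_n)$ be a finite group acting on $L=\bigoplus_{i=-1}^n\mathbb Z l_i$ via $\Phi$, and for $i\in\{-1,\dots,n\}$ let $f_i:G\to L$, $f_i(g)=\Phi(g)l_i-l_i$. Suppose $I\subseteq\{-1,1,\dots,n\}$ is such that $\xi=\frac12\sum_{i\in I}f_i$ is an $L$-valued $1$-cocycle with $0\neq[\xi]\in\mathrm H^1(G,L)$. Let $g\in G$ and let $\beta$ be a signed permutation cycle of $g$ whose underlying cycle is $(a_1\ a_2\ \dots\ a_w)$. If $a_1\in I$, then $\{a_1,\dots,a_w\}\subseteq I$.
   Context: $W(\mathsf B_n)$ is the group of signed permutations of the symbols $j^\pm$ ($j=1,\dots,n$), generated by $\mathfrak S_n$ and the involutions $c_j$ exchanging $j^+,j^-$; each element is $c_{j_1}\cdots c_{j_t}\tau$ with distinct $j_i$, $\tau\in\mathfrak S_n$; $\sigma(c_{j_1}\cdots c_{j_t}\tau)=(-1)^t$ and $W(\mathsf D_n)=\ker\sigma$. Writing $\tau$ as a product of disjoint cycles $\gamma$ (fixed points included as cycles of length one), the signed permutation cycle attached to $\gamma$ is $\beta_\gamma=(\prod_{j_i\in\mathrm{supp}\,\gamma}c_{j_i})\gamma$, and $g=\prod_\gamma\beta_\gamma$; the underlying cycle of $\beta_\gamma$ is $\gamma$. For $g=c_{j_1}\cdots c_{j_t}\tau\in W(\mathsf D_n)$ let $s(i)=-1$ if $i\in\{j_1,\dots,j_t\}$, else $s(i)=1$; $\Phi(g)$ is defined by $\Phi(g)l_0=l_0$,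 $\Phi(g)l_{-1}=l_{-1}+\frac t2l_0-\sum_{s(i)=-1}l_i$, and for $v\ge1$, $u=\tau^{-1}(v)$: $\Phi(g)l_v=l_u$ if $s(u)=1$, $\Phi(g)l_v=l_0-l_u$ if $s(u)=-1$. *)

theory Defs
  imports Main
begin

text \<open>Symbols j^+ and j^- (j = 1..n) are encoded as the integers j and -j.
  The product g*h means: first g, then h (so it is the function h o g);
  with this convention Phi below is a homomorphism.\<close>

definition symbols :: "nat \<Rightarrow> int set" where
  "symbols n = {-int n..int n} - {0}"

definition signed_perm :: "nat \<Rightarrow> (int \<Rightarrow> int) \<Rightarrow> bool" where
  "signed_perm n g \<longleftrightarrow> bij_betw g (symbols n) (symbols n)
     \<and> (\<forall>x. g (- x) = - g x) \<and> (\<forall>x. x \<notin> symbols n \<longrightarrow> g x = x)"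

definition sp_mult :: "(int \<Rightarrow> int) \<Rightarrow> (int \<Rightarrow> int) \<Rightarrow> (int \<Rightarrow> int)" where
  "sp_mult g h = h \<circ> g"

text \<open>the set {j_1,...,j_t} of indices carrying a c_j in g = c_{j_1}...c_{j_t} tau\<close>
definition neg_set :: "nat \<Rightarrow> (int \<Rightarrow> int) \<Rightarrow> int set" where
  "neg_set n g = {j \<in> {1..int n}. g j < 0}"

definition W_D :: "nat \<Rightarrow> (int \<Rightarrow> int) set" where
  "W_D n = {g. signed_perm n g \<and> even (card (neg_set n g))}"

definition und :: "(int \<Rightarrow> int) \<Rightarrow> int \<Rightarrow> int" where
  "und g j = \<bar>g j\<bar>"

definition cycle_support :: "(int \<Rightarrow> int) \<Rightarrow> int \<Rightarrow> int set" where
  "cycle_support g a = {(und g ^^ k) a | k. True}"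

text \<open>Lattice L = direct sum of Z l_i, i = -1..n: coefficient functions supported on {-1..n}.\<close>
definition lat :: "nat \<Rightarrow> (int \<Rightarrow> int) set" where
  "lat n = {x. \<forall>k. k \<notin> {-1..int n} \<longrightarrow> x k = 0}"

definition bvec :: "int \<Rightarrow> int \<Rightarrow> int" where
  "bvec i = (\<lambda>k. if k = i then 1 else 0)"

definition Phi_basis :: "nat \<Rightarrow> (int \<Rightarrow> int) \<Rightarrow> int \<Rightarrow> (int \<Rightarrow> int)" where
  "Phi_basis n g v =
     (if v = 0 then bvec 0
      else if v = -1 then
        (\<lambda>k. bvec (-1) k + int (card (neg_set n g)) div 2 * bvec 0 k
              - (\<Sum>i\<in>neg_set n g. bvec i k))
      else (let u = (THE u. u \<in> {1..int n} \<and> und g u = v) in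
            if g u > 0 then bvec u else (\<lambda>k. bvec 0 k - bvec u k)))"

definition Phi :: "nat \<Rightarrow> (int \<Rightarrow> int) \<Rightarrow> (int \<Rightarrow> int) \<Rightarrow> (int \<Rightarrow> int)" where
  "Phi n g x = (\<lambda>k. \<Sum>v\<in>{-1..int n}. x v * Phi_basis n g v k)"

definition fcoc :: "nat \<Rightarrow> int \<Rightarrow> (int \<Rightarrow> int) \<Rightarrow> (int \<Rightarrow> int)" where
  "fcoc n i g = (\<lambda>k. Phi n g (bvec i) k - bvec i k)"

end

theory Submission
  imports Defs
begin

lemma sp_basic:
  assumes sp: "signed_perm n h" and u: "u \<in> {1..int n}"
  shows "h u \<noteq> 0" "und h u \<in> {1..int n}"
proof -
  have "h u \<in> symbols n"
    using sp u unfolding signed_perm_def symbols_def bij_betw_def by auto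
  then show "h u \<noteq> 0" "und h u \<in> {1..int n}"
    unfolding symbols_def und_def by auto
qed

lemma und_inj:
  assumes sp: "signed_perm n h"
  shows "inj_on (und h) {1..int n}"
proof (rule inj_onI)
  fix u v assume u: "u \<in> {1..int n}" and v: "v \<in> {1..int n}" and e: "und h u = und h v"
  have inj: "inj_on h (symbols n)" using sp unfolding signed_perm_def bij_betw_def by auto
  have odd: "h (- v) = - h v" using sp unfolding signed_perm_def by auto
  have us: "u \<in> symbols n" "v \<in> symbols n" "- v \<in> symbols n" using u v unfolding symbols_def by auto
  from e have "h u = h v \<or> h u = h (- v)" unfolding und_def using odd by auto
  then show "u = v"
  proof
    assume "h u = h v" then show ?thesis using inj us by (auto dest: inj_onD)
  next
    assume "h u = h (- v)" then have "u = - v" using inj us by (auto dest: inj_onD)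
    then show ?thesis using u v by auto
  qed
qed

lemma und_bij:
  assumes sp: "signed_perm n h"
  shows "bij_betw (und h) {1..int n} {1..int n}"
proof -
  have "und h ` {1..int n} \<subseteq> {1..int n}" using sp_basic[OF sp] by auto
  then have "und h ` {1..int n} = {1..int n}"
    using endo_inj_surj[OF _ _ und_inj[OF sp]] by auto
  then show ?thesis using und_inj[OF sp] unfolding bij_betw_def by auto
qed

lemma Phi_basis_pos:
  assumes sp: "signed_perm n h" and u: "u \<in> {1..int n}"
  shows "Phi_basis n h (und h u) = (if h u > 0 then bvec u else (\<lambda>k. bvec 0 k - bvec u k))"
proof -
  have r: "und h u \<in> {1..int n}" using sp_basic[OF sp u] by auto
  have t: "(THE u'. u' \<in> {1..int n} \<and> und h u' = und h u) = u"
    using u und_inj[OF sp] by (auto intro!: the_equality dest: inj_onD)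
  show ?thesis using r unfolding Phi_basis_def t Let_def by auto
qed

lemma Phi_bvec:
  assumes "i \<in> {-1..int n}"
  shows "Phi n h (bvec i) = Phi_basis n h i"
proof
  fix k
  have "Phi n h (bvec i) k = (\<Sum>v\<in>{-1..int n}. if v = i then Phi_basis n h v k else 0)"
    unfolding Phi_def bvec_def by (rule sum.cong) auto
  also have "\<dots> = Phi_basis n h i k" using assms by (simp add: sum.delta)
  finally show "Phi n h (bvec i) k = Phi_basis n h i k" .
qed

lemma fcoc_eq:
  assumes "i \<in> {-1..int n}"
  shows "fcoc n i h k = Phi_basis n h i k - bvec i k"
  unfolding fcoc_def Phi_bvec[OF assms] by simp

lemma neg_set_sub: "neg_set n h \<subseteq> {1..int n}"
  unfolding neg_set_def by auto

lemma fcoc_m1: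
  "fcoc n (-1) h k = (if k = 0 then int (card (neg_set n h)) div 2 else 0)
      - (if k \<in> neg_set n h then 1 else 0)"
proof -
  have fin: "finite (neg_set n h)" using neg_set_sub[of n h] finite_subset by blast
  have s: "(\<Sum>i\<in>neg_set n h. bvec i k) = (if k \<in> neg_set n h then 1 else 0)"
    unfolding bvec_def using fin by (simp add: sum.delta')
  have f: "fcoc n (-1) h k = Phi_basis n h (-1) k - bvec (-1) k" by (rule fcoc_eq) simp
  have "0 \<notin> neg_set n h" using neg_set_sub[of n h] by auto
  then show ?thesis
    unfolding f Phi_basis_def
    using fin by (auto simp: bvec_def sum.delta sum.delta')
qed

lemma sumJ:
  assumes sp: "signed_perm n h" and J: "J \<subseteq> {1..int n}"
  shows "(\<Sum>i\<in>J. fcoc n i h k) =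
     (\<Sum>u\<in>{1..int n}. if und h u \<in> J then Phi_basis n h (und h u) k else 0)
      - (if k \<in> J then 1 else 0)"
proof -
  have fin: "finite J" using J finite_subset by blast
  have "(\<Sum>i\<in>J. fcoc n i h k) = (\<Sum>i\<in>J. Phi_basis n h i k) - (\<Sum>i\<in>J. bvec i k)"
    unfolding sum_subtractf[symmetric] using J by (intro sum.cong) (auto simp: fcoc_eq)
  also have "(\<Sum>i\<in>J. bvec i k) = (if k \<in> J then 1 else 0)"
    unfolding bvec_def using fin by (simp add: sum.delta')
  also have "(\<Sum>i\<in>J. Phi_basis n h i k) = (\<Sum>i\<in>{1..int n}. if i \<in> J then Phi_basis n h i k else 0)"
    using sum.inter_restrict[of "{1..int n}" "\<lambda>i. Phi_basis n h i k" J] J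
    by (simp add: Int_absorb1)
  also have "\<dots> = (\<Sum>u\<in>{1..int n}. if und h u \<in> J then Phi_basis n h (und h u) k else 0)"
    using sum.reindex_bij_betw[OF und_bij[OF sp], of "\<lambda>i. if i \<in> J then Phi_basis n h i k else 0"]
    by simp
  finally show ?thesis .
qed

definition Asum :: "nat \<Rightarrow> (int \<Rightarrow> int) \<Rightarrow> int set \<Rightarrow> int \<Rightarrow> int" where
  "Asum n h J k = (\<Sum>u\<in>{1..int n}. if und h u \<in> J then Phi_basis n h (und h u) k else 0)"

lemma A_pos:
  assumes sp: "signed_perm n h" and k: "k \<in> {1..int n}"
  shows "Asum n h J k = (if und h k \<in> J then (if h k > 0 then 1 else -1) else 0)"
proof -
  have "Asum n h J k = (\<Sum>u\<in>{1..int n}. if u = k then (if und h k \<in> J then (if h k > 0 then 1 else -1) else 0) else 0)"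
    unfolding Asum_def
  proof (rule sum.cong)
    fix u assume u: "u \<in> {1..int n}"
    show "(if und h u \<in> J then Phi_basis n h (und h u) k else 0) =
      (if u = k then (if und h k \<in> J then (if h k > 0 then 1 else -1) else 0) else 0)"
      using k unfolding Phi_basis_pos[OF sp u] by (auto simp: bvec_def)
  qed simp
  also have "\<dots> = (if und h k \<in> J then (if h k > 0 then 1 else -1) else 0)"
    using k by (simp add: sum.delta)
  finally show ?thesis .
qed

lemma A_zero:
  assumes sp: "signed_perm n h"
  shows "Asum n h J 0 = (\<Sum>u\<in>{1..int n}. if und h u \<in> J \<and> h u < 0 then 1 else 0)"
  unfolding Asum_def
proof (rule sum.cong)
  fix u assume u: "u \<in> {1..int n}"
  have "h u \<noteq> 0" using sp_basic[OF sp u] by auto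
  then show "(if und h u \<in> J then Phi_basis n h (und h u) 0 else 0) =
      (if und h u \<in> J \<and> h u < 0 then 1 else 0)"
    using u unfolding Phi_basis_pos[OF sp u] by (auto simp: bvec_def)
qed simp

lemma A_out:
  assumes sp: "signed_perm n h" and k: "k \<notin> {0..int n}"
  shows "Asum n h J k = 0"
  unfolding Asum_def
proof (rule sum.neutral, rule ballI)
  fix u assume u: "u \<in> {1..int n}"
  show "(if und h u \<in> J then Phi_basis n h (und h u) k else 0) = 0"
    using u k unfolding Phi_basis_pos[OF sp u] by (auto simp: bvec_def)
qed

lemma key:
  assumes sp: "signed_perm n h" and J: "J \<subseteq> {1..int n}"
    and ev: "even (card (neg_set n h))"
    and par: "\<And>k. k \<in> {1..int n} \<Longrightarrow>
       even (Asum n h J k - (if k \<in> J then 1 else 0) + fcoc n (-1) h k)"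
  shows "Asum n h J k - (if k \<in> J then 1 else 0) = fcoc n (-1) h k"
proof -
  have Nmem: "k \<in> neg_set n h \<longleftrightarrow> k \<in> {1..int n} \<and> h k < 0" for k
    unfolding neg_set_def by auto
  have pt: "(h u < 0 \<longrightarrow> (und h u \<in> J \<longleftrightarrow> u \<notin> J)) \<and> (\<not> h u < 0 \<longrightarrow> (und h u \<in> J \<longleftrightarrow> u \<in> J))"
    if u: "u \<in> {1..int n}" for u
  proof -
    have h0: "h u \<noteq> 0" using sp_basic[OF sp u] by auto
    have "even (Asum n h J u - (if u \<in> J then 1 else 0) + fcoc n (-1) h u)" using par[OF u] .
    then show ?thesis
      unfolding A_pos[OF sp u] fcoc_m1 using u h0 Nmem[of u]
      by (auto split: if_splits)
  qed
  show ?thesis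
  proof (cases "k \<in> {1..int n}")
    case True
    show ?thesis using pt[OF True] sp_basic[OF sp True] True Nmem[of k]
      unfolding A_pos[OF sp True] fcoc_m1 by (auto split: if_splits)
  next
    case False
    show ?thesis
    proof (cases "k = 0")
      case False2: False
      with \<open>k \<notin> {1..int n}\<close> have "k \<notin> {0..int n}" by auto
      then show ?thesis unfolding A_out[OF sp \<open>k \<notin> {0..int n}\<close>] fcoc_m1
        using J False2 Nmem[of k] \<open>k \<notin> {1..int n}\<close> by auto
    next
      case True
      let ?P = "\<lambda>u. if und h u \<in> J \<and> h u < 0 then (1::int) else 0"
      let ?Q = "\<lambda>u. if u \<in> J \<and> h u < 0 then (1::int) else 0"
      let ?p = "\<lambda>u. if und h u \<in> J then (1::int) else 0"
      let ?q = "\<lambda>u. if u \<in> J then (1::int) else 0"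
      let ?N = "\<lambda>u. if h u < 0 then (1::int) else 0"
      let ?S = "{1..int n}"
      have cardN: "int (card (neg_set n h)) = sum ?N ?S"
      proof -
        have "sum ?N ?S = sum (\<lambda>_. 1::int) {u \<in> ?S. h u < 0}"
          by (rule sum.inter_filter[symmetric]) simp
        then show ?thesis unfolding neg_set_def by simp
      qed
      have pq: "sum ?p ?S = sum ?q ?S"
        using sum.reindex_bij_betw[OF und_bij[OF sp], of ?q] by simp
      have e1: "?p u - ?P u = ?q u - ?Q u" if "u \<in> ?S" for u
      proof -
        note pu = pt[OF that]
        show ?thesis
        proof (cases "h u < 0")
          case True then show ?thesis using pu by (cases "u \<in> J") simp_all
        next
          case False then show ?thesis using pu by (cases "u \<in> J") simp_all
        qed
      qed
      have e2: "?P u + ?Q u = ?N u" if "u \<in> ?S" for u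
      proof -
        note pu = pt[OF that]
        show ?thesis
        proof (cases "h u < 0")
          case True then show ?thesis using pu by (cases "u \<in> J") simp_all
        next
          case False then show ?thesis using pu by (cases "u \<in> J") simp_all
        qed
      qed
      have "sum ?p ?S - sum ?P ?S = sum ?q ?S - sum ?Q ?S"
        unfolding sum_subtractf[symmetric] by (rule sum.cong) (simp_all add: e1)
      then have PQ: "sum ?P ?S = sum ?Q ?S" using pq by simp
      have "sum ?P ?S + sum ?Q ?S = sum ?N ?S"
        unfolding sum.distrib[symmetric] by (rule sum.cong) (simp_all add: e2)
      then have "2 * sum ?P ?S = int (card (neg_set n h))" using PQ cardN by simp
      then show ?thesis unfolding True A_zero[OF sp] fcoc_m1
        using J Nmem[of 0] by auto
    qed
  qed
qed

theorem lemma3p3: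
  fixes n :: nat and G :: "(int \<Rightarrow> int) set" and I :: "int set"
    and g :: "int \<Rightarrow> int" and a :: int
  assumes G_sub: "G \<subseteq> W_D n"
    and G_fin: "finite G"
    and G_id: "id \<in> G"
    and G_mult: "\<And>g h. g \<in> G \<Longrightarrow> h \<in> G \<Longrightarrow> sp_mult g h \<in> G"
    and G_inv: "\<And>g. g \<in> G \<Longrightarrow> inv g \<in> G"
    and I_sub: "I \<subseteq> {-1} \<union> {1..int n}"
    and L_valued: "\<And>h k. h \<in> G \<Longrightarrow> even (\<Sum>i\<in>I. fcoc n i h k)"
    and cocycle: "\<And>h1 h2. h1 \<in> G \<Longrightarrow> h2 \<in> G \<Longrightarrow>
        (\<lambda>k. (\<Sum>i\<in>I. fcoc n i (sp_mult h1 h2) k) div 2) =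
        (\<lambda>k. (\<Sum>i\<in>I. fcoc n i h1 k) div 2
              + Phi n h1 (\<lambda>k'. (\<Sum>i\<in>I. fcoc n i h2 k') div 2) k)"
    and nontrivial: "\<not> (\<exists>x\<in>lat n. \<forall>h\<in>G.
        (\<lambda>k. (\<Sum>i\<in>I. fcoc n i h k) div 2) = (\<lambda>k. Phi n h x k - x k))"
    and g_in: "g \<in> G"
    and a_range: "a \<in> {1..int n}"
    and a_in: "a \<in> I"
  shows "cycle_support g a \<subseteq> I"
proof -
  define J where "J = I - {-1}"
  have J: "J \<subseteq> {1..int n}" using I_sub unfolding J_def by auto
  have finJ: "finite J" using J finite_subset by blast
  have spG: "signed_perm n h" and evG: "even (card (neg_set n h))" if "h \<in> G" for h
    using G_sub that unfolding W_D_def by auto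
  have Sdec: "(\<Sum>i\<in>I. fcoc n i h k) = Asum n h J k - (if k \<in> J then 1 else 0)
      + (if -1 \<in> I then fcoc n (-1) h k else 0)" if h: "h \<in> G" for h k
  proof -
    have sJ: "(\<Sum>i\<in>J. fcoc n i h k) = Asum n h J k - (if k \<in> J then 1 else 0)"
      using sumJ[OF spG[OF h] J] unfolding Asum_def by simp
    show ?thesis
    proof (cases "-1 \<in> I")
      case True
      then have "I = insert (-1) J" "-1 \<notin> J" unfolding J_def by auto
      then show ?thesis using sJ finJ True by simp
    next
      case False
      then have "I = J" unfolding J_def by auto
      then show ?thesis using sJ False by simp
    qed
  qed
  show ?thesis
  proof (cases "-1 \<in> I")
    case True
    have "\<exists>x\<in>lat n. \<forall>h\<in>G.
        (\<lambda>k. (\<Sum>i\<in>I. fcoc n i h k) div 2) = (\<lambda>k. Phi n h x k - x k)"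
    proof (intro bexI[of _ "bvec (-1)"] ballI ext)
      fix h k assume h: "h \<in> G"
      have par: "even (Asum n h J k' - (if k' \<in> J then 1 else 0) + fcoc n (-1) h k')"
        if "k' \<in> {1..int n}" for k'
        using L_valued[OF h, of k'] Sdec[OF h, of k'] True by simp
      have "Asum n h J k - (if k \<in> J then 1 else 0) = fcoc n (-1) h k"
        by (rule key[OF spG[OF h] J evG[OF h] par])
      then have "(\<Sum>i\<in>I. fcoc n i h k) = 2 * fcoc n (-1) h k"
        using Sdec[OF h, of k] True by simp
      then show "(\<Sum>i\<in>I. fcoc n i h k) div 2 = Phi n h (bvec (-1)) k - bvec (-1) k"
        unfolding fcoc_def by simp
    next
      show "bvec (-1) \<in> lat n" unfolding lat_def bvec_def by auto
    qed
    with nontrivial show ?thesis by blast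
  next
    case False
    have step: "und g b \<in> J" if b: "b \<in> J" for b
    proof -
      have br: "b \<in> {1..int n}" using b J by auto
      have "even (Asum n g J b - 1)"
        using L_valued[OF g_in, of b] Sdec[OF g_in, of b] False b by simp
      then show ?thesis unfolding A_pos[OF spG[OF g_in] br] by (auto split: if_splits)
    qed
    have "(und g ^^ m) a \<in> J" for m
    proof (induction m)
      case 0 then show ?case using a_in a_range unfolding J_def by auto
    next
      case (Suc m) then show ?case using step by simp
    qed
    then show ?thesis unfolding cycle_support_def J_def by auto
  qed
qed

end
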